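(* Let $\mathcal{C}$ be a $k$-linear category with exponential algebraic growth. Then there exist an object $L$ of $\mathcal{C}$ and a finite set $\Sigma$ of morphisms of $\mathcal{C}$ such that $\limsup_n\frac1n\log\dim_k W_\Sigma(n;L)>0$.
   Context: For a $k$-linear category $\mathcal{C}$, finite set $\Sigma$ of morphisms and $n\ge1$, $W_\Sigma(n)\subset\bigoplus_{K,L}\hom(K,L)$ is the $k$-span of all composable words $a_1\cdots a_l$ with $a_i\in\Sigma$, $l\le n$, and $W_\Sigma(n;L)\subset\hom(L,L)$ is the span of those such words which are endomorphisms of $L$. $\mathcal{C}$ has exponential algebraic growth if $\limsup_n\frac1n\log\dim_k W_\Sigma(n)>0$ for some finite $\Sigma$. *)

theory Defs
  imports Complex_Main "HOL-Library.Liminf_Limsup" "HOL-Library.Extended_Real"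
begin

text \<open>The direct sum of all hom spaces
  is realised as an internal direct sum of subspaces hom K L of a k-vector space
  of type 'm (scalar multiplication scale).  Composition cmp g f is the
  composite of f followed by g, for f in hom K L and g in hom L M.\<close>

definition klinear_cat ::
  "('k::field \<Rightarrow> 'm::ab_group_add \<Rightarrow> 'm) \<Rightarrow> ('o \<Rightarrow> 'o \<Rightarrow> 'm set)
   \<Rightarrow> ('m \<Rightarrow> 'm \<Rightarrow> 'm) \<Rightarrow> ('o \<Rightarrow> 'm) \<Rightarrow> bool" where
  "klinear_cat scale hom cmp ident \<longleftrightarrow>
     vector_space scale \<and>
     (\<forall>K L. module.subspace scale (hom K L)) \<and>
     (\<forall>K L. hom K L \<inter> module.span scale (\<Union>{hom K' L' | K' L'. (K', L') \<noteq> (K, L)}) = {0}) \<and>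
     (\<forall>K L M f g. f \<in> hom K L \<longrightarrow> g \<in> hom L M \<longrightarrow> cmp g f \<in> hom K M) \<and>
     (\<forall>K L M f f' g. f \<in> hom K L \<longrightarrow> f' \<in> hom K L \<longrightarrow> g \<in> hom L M \<longrightarrow>
        cmp g (f + f') = cmp g f + cmp g f') \<and>
     (\<forall>K L M f g g'. f \<in> hom K L \<longrightarrow> g \<in> hom L M \<longrightarrow> g' \<in> hom L M \<longrightarrow>
        cmp (g + g') f = cmp g f + cmp g' f) \<and>
     (\<forall>K L M c f g. f \<in> hom K L \<longrightarrow> g \<in> hom L M \<longrightarrow>
        cmp g (scale c f) = scale c (cmp g f) \<and> cmp (scale c g) f = scale c (cmp g f)) \<and>
     (\<forall>K L M N f g h. f \<in> hom K L \<longrightarrow> g \<in> hom L M \<longrightarrow> h \<in> hom M N \<longrightarrow>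
        cmp h (cmp g f) = cmp (cmp h g) f) \<and>
     (\<forall>K. ident K \<in> hom K K) \<and>
     (\<forall>K L f. f \<in> hom K L \<longrightarrow> cmp f (ident K) = f \<and> cmp (ident L) f = f)"

text \<open>A morphism is a triple (source, target, element of hom source target).\<close>

definition is_mor :: "('o \<Rightarrow> 'o \<Rightarrow> 'm set) \<Rightarrow> 'o \<times> 'o \<times> 'm \<Rightarrow> bool" where
  "is_mor hom x \<longleftrightarrow> snd (snd x) \<in> hom (fst x) (fst (snd x))"

text \<open>The word a_1 ... a_l denotes a_1 \<circ> a_2 \<circ> ... \<circ> a_l.\<close>

fun compose :: "('m \<Rightarrow> 'm \<Rightarrow> 'm) \<Rightarrow> ('o \<times> 'o \<times> 'm::zero) list \<Rightarrow> 'm" where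
  "compose cmp [] = 0"
| "compose cmp [x] = snd (snd x)"
| "compose cmp (x # y # xs) = cmp (snd (snd x)) (compose cmp (y # xs))"

definition composable :: "('o \<times> 'o \<times> 'm) list \<Rightarrow> bool" where
  "composable w \<longleftrightarrow> (\<forall>i. Suc i < length w \<longrightarrow> fst (w ! i) = fst (snd (w ! Suc i)))"

definition words :: "('o \<times> 'o \<times> 'm) set \<Rightarrow> nat \<Rightarrow> ('o \<times> 'o \<times> 'm) list set" where
  "words \<Sigma> n = {w. 1 \<le> length w \<and> length w \<le> n \<and> set w \<subseteq> \<Sigma> \<and> composable w}"

definition W :: "('k::field \<Rightarrow> 'm::ab_group_add \<Rightarrow> 'm) \<Rightarrow> ('m \<Rightarrow> 'm \<Rightarrow> 'm)
    \<Rightarrow> ('o \<times> 'o \<times> 'm) set \<Rightarrow> nat \<Rightarrow> 'm set" where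
  "W scale cmp \<Sigma> n = module.span scale (compose cmp ` words \<Sigma> n)"

definition W_end :: "('k::field \<Rightarrow> 'm::ab_group_add \<Rightarrow> 'm) \<Rightarrow> ('m \<Rightarrow> 'm \<Rightarrow> 'm)
    \<Rightarrow> ('o \<times> 'o \<times> 'm) set \<Rightarrow> nat \<Rightarrow> 'o \<Rightarrow> 'm set" where
  "W_end scale cmp \<Sigma> n L = module.span scale
     (compose cmp ` {w \<in> words \<Sigma> n. fst (last w) = L \<and> fst (snd (hd w)) = L})"

definition exp_alg_growth :: "('k::field \<Rightarrow> 'm::ab_group_add \<Rightarrow> 'm) \<Rightarrow> ('o \<Rightarrow> 'o \<Rightarrow> 'm set)
    \<Rightarrow> ('m \<Rightarrow> 'm \<Rightarrow> 'm) \<Rightarrow> bool" where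
  "exp_alg_growth scale hom cmp \<longleftrightarrow>
     (\<exists>\<Sigma>. finite \<Sigma> \<and> (\<forall>x\<in>\<Sigma>. is_mor hom x) \<and>
        limsup (\<lambda>n. ereal (ln (real (vector_space.dim scale (W scale cmp \<Sigma> n))) / real n)) > 0)"

end

theory Submission
  imports Defs
begin



lemma composable_Nil[simp]: "composable []" by (simp add: composable_def)

lemma composable_Cons:
  "composable (x # w) \<longleftrightarrow> composable w \<and> (w \<noteq> [] \<longrightarrow> fst x = fst (snd (hd w)))"
  unfolding composable_def
  apply (cases w)
   apply simp
  apply (auto simp: nth_Cons split: nat.splits)
  done

lemma composable_append:
  "composable (u @ v) \<longleftrightarrow> composable u \<and> composable v \<and>
     (u \<noteq> [] \<longrightarrow> v \<noteq> [] \<longrightarrow> fst (last u) = fst (snd (hd v)))"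
  by (induction u) (auto simp: composable_Cons)

lemma compose_Cons: "v \<noteq> [] \<Longrightarrow> compose cmp (y # v) = cmp (snd (snd y)) (compose cmp v)"
  by (cases v) auto




lemma asym:
  fixes a :: "nat \<Rightarrow> nat" and d :: "'i \<Rightarrow> nat \<Rightarrow> nat" and C :: real and m :: nat
  assumes fI: "finite I" and C: "C \<ge> 1"
    and bnd: "\<And>n. real (a n) \<le> C * (1 + (\<Sum>i\<in>I. real (d i n)))^m"
    and hyp: "limsup (\<lambda>n. ereal (ln (real (a n)) / real n)) > 0"
  shows "\<exists>i\<in>I. limsup (\<lambda>n. ereal (ln (real (d i n)) / real n)) > 0"
proof (rule ccontr)
  assume "\<not> ?thesis"
  hence le0: "\<forall>i\<in>I. limsup (\<lambda>n. ereal (ln (real (d i n)) / real n)) \<le> 0" by (simp add: not_less)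
  obtain \<delta> where d0: "0 < ereal \<delta>" and dl: "ereal \<delta> < limsup (\<lambda>n. ereal (ln (real (a n)) / real n))"
    using ereal_dense2[OF hyp] by blast
  have \<delta>: "\<delta> > 0" using d0 by simp
  define \<epsilon> where "\<epsilon> = \<delta> / (2 * (real m + 1))"
  have \<epsilon>0: "\<epsilon> > 0" unfolding \<epsilon>_def using \<delta> by simp
  have m\<epsilon>: "real m * \<epsilon> \<le> \<delta> / 2"
  proof -
    have "real m * \<epsilon> = (\<delta>/2) * (real m / (real m + 1))" unfolding \<epsilon>_def by (simp add: field_simps)
    also have "\<dots> \<le> (\<delta>/2) * 1" using \<delta> by (intro mult_left_mono) auto
    finally show ?thesis by simp
  qed
  have ev1: "eventually (\<lambda>n. \<forall>i\<in>I. ereal (ln (real (d i n)) / real n) < ereal \<epsilon>) sequentially"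
  proof (rule eventually_ball_finite[OF fI], rule ballI)
    fix i assume "i \<in> I"
    hence "limsup (\<lambda>n. ereal (ln (real (d i n)) / real n)) < ereal \<epsilon>" using le0 \<epsilon>0
      by (meson ereal_less(2) order_le_less_trans)
    thus "eventually (\<lambda>n. ereal (ln (real (d i n)) / real n) < ereal \<epsilon>) sequentially"
      by (rule Limsup_lessD)
  qed
  define C' where "C' = C * (real (card I) + 1)^m"
  have p1: "(real (card I) + 1)^m \<ge> 1" by (rule one_le_power) simp
  have "1 * 1 \<le> C * (real (card I) + 1)^m" using C p1 by (intro mult_mono) auto
  hence C'1: "C' \<ge> 1" unfolding C'_def by simp
  define N where "N = nat \<lceil>2 * ln C' / \<delta>\<rceil> + 1"
  have ev2: "eventually (\<lambda>n. N \<le> n) sequentially" by simp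
  have main: "ereal (ln (real (a n)) / real n) \<le> ereal \<delta>"
    if n: "N \<le> n" and h: "\<forall>i\<in>I. ereal (ln (real (d i n)) / real n) < ereal \<epsilon>" for n
  proof -
    have n1: "real n \<ge> 1" using n unfolding N_def by simp
    have npos: "real n > 0" using n1 by simp
    have lnC': "ln C' \<le> \<delta> / 2 * real n"
    proof -
      have "2 * ln C' / \<delta> \<le> real n" using n unfolding N_def by linarith
      thus ?thesis using \<delta> by (simp add: field_simps)
    qed
    have di: "real (d i n) \<le> exp (\<epsilon> * real n)" if i: "i \<in> I" for i
    proof (cases "d i n = 0")
      case True then show ?thesis by simp
    next
      case False
      have "ln (real (d i n)) / real n < \<epsilon>" using h i by simp
      hence "ln (real (d i n)) < \<epsilon> * real n" using npos by (simp add: divide_less_eq)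
      hence "exp (ln (real (d i n))) < exp (\<epsilon> * real n)" by simp
      thus ?thesis using False by simp
    qed
    have e1: "1 \<le> exp (\<epsilon> * real n)" using \<epsilon>0 npos by simp
    have "(\<Sum>i\<in>I. real (d i n)) \<le> real (card I) * exp (\<epsilon> * real n)"
      using sum_bounded_above[of I "\<lambda>i. real (d i n)" "exp (\<epsilon> * real n)"] di by simp
    hence s: "1 + (\<Sum>i\<in>I. real (d i n)) \<le> (real (card I) + 1) * exp (\<epsilon> * real n)"
    proof -
      have "(real (card I) + 1) * exp (\<epsilon> * real n) = real (card I) * exp (\<epsilon> * real n) + exp (\<epsilon> * real n)"
        by (simp add: distrib_right)
      thus ?thesis using e1 \<open>(\<Sum>i\<in>I. real (d i n)) \<le> real (card I) * exp (\<epsilon> * real n)\<close> by linarith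
    qed
    have "real (a n) \<le> C * ((real (card I) + 1) * exp (\<epsilon> * real n))^m"
    proof -
      have x0: "0 \<le> 1 + (\<Sum>i\<in>I. real (d i n))" by (simp add: sum_nonneg add_nonneg_nonneg)
      have "(1 + (\<Sum>i\<in>I. real (d i n)))^m \<le> ((real (card I) + 1) * exp (\<epsilon> * real n))^m"
        by (rule power_mono[OF s x0])
      hence "C * (1 + (\<Sum>i\<in>I. real (d i n)))^m \<le> C * ((real (card I) + 1) * exp (\<epsilon> * real n))^m"
        using C by (intro mult_left_mono) auto
      thus ?thesis using bnd[of n] by linarith
    qed
    also have "\<dots> = C' * exp (real m * (\<epsilon> * real n))"
      unfolding C'_def by (simp add: power_mult_distrib exp_of_nat_mult)
    finally have an: "real (a n) \<le> C' * exp (real m * (\<epsilon> * real n))" .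
    show ?thesis
    proof (cases "a n = 0")
      case True then show ?thesis using \<delta> by simp
    next
      case False
      have "ln (real (a n)) \<le> ln (C' * exp (real m * (\<epsilon> * real n)))"
        using an False by (subst ln_le_cancel_iff) auto
      also have "\<dots> = ln C' + real m * \<epsilon> * real n" using C'1 by (simp add: ln_mult)
      also have "\<dots> \<le> \<delta> / 2 * real n + \<delta> / 2 * real n"
        using lnC' m\<epsilon> npos by (intro add_mono mult_right_mono) auto
      finally have "ln (real (a n)) \<le> \<delta> * real n" by simp
      hence "ln (real (a n)) / real n \<le> \<delta>" using npos by (simp add: divide_le_eq)
      thus ?thesis by simp
    qed
  qed
  have "limsup (\<lambda>n. ereal (ln (real (a n)) / real n)) \<le> ereal \<delta>"
    by (rule Limsup_bounded) (use eventually_conj[OF ev2 ev1] main in \<open>auto elim: eventually_mono\<close>)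
  thus False using dl by simp
qed


context vector_space begin

lemma dim_le_card': "finite X \<Longrightarrow> dim X \<le> card X"
  using dim_le_card span_superset by blast

lemma dim_le_of_span:
  assumes "finite Y" "X \<subseteq> span Y" shows "dim X \<le> dim Y"
proof -
  obtain B where B: "B \<subseteq> Y" "independent B" "Y \<subseteq> span B" "card B = dim Y"
    using basis_exists by blast
  have "span Y \<subseteq> span B" using B(3) by (simp add: span_minimal)
  hence "X \<subseteq> span B" using assms(2) by blast
  moreover have "finite B" using B(1) assms(1) finite_subset by blast
  ultimately show ?thesis using dim_le_card B(4) by metis
qed

lemma dim_le_subset: "finite Y \<Longrightarrow> X \<subseteq> Y \<Longrightarrow> dim X \<le> dim Y"
  by (meson dim_le_of_span span_superset subset_trans)

lemma dim_Un_le: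
  assumes "finite A" "finite B" shows "dim (A \<union> B) \<le> dim A + dim B"
proof -
  obtain BA where BA: "BA \<subseteq> A" "independent BA" "A \<subseteq> span BA" "card BA = dim A"
    using basis_exists by blast
  obtain BB where BB: "BB \<subseteq> B" "independent BB" "B \<subseteq> span BB" "card BB = dim B"
    using basis_exists by blast
  have f: "finite BA" "finite BB" using BA BB assms finite_subset by blast+
  have "A \<union> B \<subseteq> span (BA \<union> BB)" using BA(3) BB(3) span_mono[of BA "BA \<union> BB"] span_mono[of BB "BA \<union> BB"] by blast
  hence "dim (A \<union> B) \<le> card (BA \<union> BB)" using dim_le_card f by blast
  also have "\<dots> \<le> card BA + card BB" by (rule card_Un_le)
  finally show ?thesis using BA BB by simp
qed

lemma dim_UN_le:
  assumes "finite I" "\<And>i. i \<in> I \<Longrightarrow> finite (A i)"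
  shows "dim (\<Union>i\<in>I. A i) \<le> (\<Sum>i\<in>I. dim (A i))"
  using assms
proof (induction I rule: finite_induct)
  case empty then show ?case using dim_le_card'[of "{}"] by simp
next
  case (insert x F)
  have "dim (\<Union>i\<in>insert x F. A i) = dim (A x \<union> (\<Union>i\<in>F. A i))" by simp
  also have "\<dots> \<le> dim (A x) + dim (\<Union>i\<in>F. A i)"
    using insert by (intro dim_Un_le) auto
  also have "\<dots> \<le> dim (A x) + (\<Sum>i\<in>F. dim (A i))" using insert by simp
  finally show ?case using insert by simp
qed


end


locale kcat =
  fixes scale :: "'k::field \<Rightarrow> 'm::ab_group_add \<Rightarrow> 'm"
    and hom :: "'o \<Rightarrow> 'o \<Rightarrow> 'm set"
    and cmp :: "'m \<Rightarrow> 'm \<Rightarrow> 'm"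
    and ident :: "'o \<Rightarrow> 'm"
  assumes kc: "klinear_cat scale hom cmp ident"
begin

sublocale vs: vector_space scale using kc by (simp add: klinear_cat_def)

lemmas kcp = kc[unfolded klinear_cat_def]
lemma hom_sub: "vs.subspace (hom K L)" using kc by (simp add: klinear_cat_def)
lemma cmp_hom: "f \<in> hom K L \<Longrightarrow> g \<in> hom L M \<Longrightarrow> cmp g f \<in> hom K M"
  using kc by (simp add: klinear_cat_def)
lemma cmp_add2: "f \<in> hom K L \<Longrightarrow> f' \<in> hom K L \<Longrightarrow> g \<in> hom L M \<Longrightarrow> cmp g (f + f') = cmp g f + cmp g f'"
  using kcp[THEN conjunct2[THEN conjunct2, THEN conjunct2, THEN conjunct2, THEN conjunct1]] by blast
lemma cmp_add1: "f \<in> hom K L \<Longrightarrow> g \<in> hom L M \<Longrightarrow> g' \<in> hom L M \<Longrightarrow> cmp (g + g') f = cmp g f + cmp g' f"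
  using kcp[THEN conjunct2[THEN conjunct2, THEN conjunct2, THEN conjunct2, THEN conjunct2, THEN conjunct1]] by blast
lemma cmp_scale: "f \<in> hom K L \<Longrightarrow> g \<in> hom L M \<Longrightarrow>
        cmp g (scale c f) = scale c (cmp g f) \<and> cmp (scale c g) f = scale c (cmp g f)"
  using kcp[THEN conjunct2[THEN conjunct2, THEN conjunct2, THEN conjunct2, THEN conjunct2, THEN conjunct2, THEN conjunct1]] by blast
lemma cmp_assoc: "f \<in> hom K L \<Longrightarrow> g \<in> hom L M \<Longrightarrow> h \<in> hom M N \<Longrightarrow>
        cmp h (cmp g f) = cmp (cmp h g) f"
  using kcp[THEN conjunct2[THEN conjunct2, THEN conjunct2, THEN conjunct2, THEN conjunct2, THEN conjunct2, THEN conjunct2, THEN conjunct1]] by blast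

lemma cmp_0_1: "f \<in> hom K L \<Longrightarrow> cmp 0 f = 0"
proof -
  assume f: "f \<in> hom K L"
  have z: "(0::'m) \<in> hom L M" for M using hom_sub vs.subspace_0 by blast
  have "cmp (scale 0 0) f = scale 0 (cmp 0 f)" using cmp_scale[OF f z] by blast
  thus ?thesis by simp
qed

lemma cmp_0_2: "g \<in> hom L M \<Longrightarrow> cmp g 0 = 0"
proof -
  assume g: "g \<in> hom L M"
  have z: "(0::'m) \<in> hom K L" for K using hom_sub vs.subspace_0 by blast
  have "cmp g (scale 0 0) = scale 0 (cmp g 0)" using cmp_scale[OF z g] by blast
  thus ?thesis by simp
qed

lemma cmp_span:
  assumes A: "A \<subseteq> hom L M" and B: "B \<subseteq> hom K L"
    and a: "a \<in> vs.span A" and b: "b \<in> vs.span B"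
  shows "cmp a b \<in> vs.span ((\<lambda>(g,f). cmp g f) ` (A \<times> B))"
proof -
  let ?X = "vs.span ((\<lambda>(g,f). cmp g f) ` (A \<times> B))"
  have spA: "vs.span A \<subseteq> hom L M" using A hom_sub vs.span_minimal by blast
  have spB: "vs.span B \<subseteq> hom K L" using B hom_sub vs.span_minimal by blast
  have z: "(0::'m) \<in> hom X Y" for X Y using hom_sub vs.subspace_0 by blast
  have inner: "cmp a' b \<in> ?X" if a': "a' \<in> A" for a'
  proof -
    have a'h: "a' \<in> hom L M" using a' A by blast
    have "b \<in> hom K L \<and> cmp a' b \<in> ?X" using b
    proof (induction rule: vs.span_induct_alt)
      case base
      have "cmp a' 0 = 0" by (rule cmp_0_2[OF a'h])
      then show ?case using z vs.span_zero by simp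
    next
      case (step c x y)
      have x: "x \<in> hom K L" using step(1) B by blast
      have sx: "scale c x \<in> hom K L" using x hom_sub vs.subspace_scale by blast
      have y: "y \<in> hom K L" using step(2) by blast
      have e: "cmp a' (scale c x + y) = scale c (cmp a' x) + cmp a' y"
        using cmp_add2[OF sx y a'h] cmp_scale[OF x a'h] by simp
      have m: "cmp a' x \<in> ?X" using step(1) a' by (intro vs.span_base) force
      have h1: "scale c x + y \<in> hom K L" using sx y hom_sub vs.subspace_add by blast
      have h2: "scale c (cmp a' x) + cmp a' y \<in> ?X"
        using m step(2) vs.span_add vs.span_scale by blast
      show ?case using h1 h2 e by simp
    qed
    thus ?thesis by blast
  qed
  have bh: "b \<in> hom K L" using b spB by blast
  have "a \<in> hom L M \<and> cmp a b \<in> ?X" using a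
  proof (induction rule: vs.span_induct_alt)
    case base
    have "cmp 0 b = 0" by (rule cmp_0_1[OF bh])
    then show ?case using z vs.span_zero by simp
  next
    case (step c x y)
    have x: "x \<in> hom L M" using step(1) A by blast
    have sx: "scale c x \<in> hom L M" using x hom_sub vs.subspace_scale by blast
    have y: "y \<in> hom L M" using step(2) by blast
    have e: "cmp (scale c x + y) b = scale c (cmp x b) + cmp y b"
      using cmp_add1[OF bh sx y] cmp_scale[OF bh x] by simp
    have m: "cmp x b \<in> ?X" using inner step(1) by blast
    have h1: "scale c x + y \<in> hom L M" using sx y hom_sub vs.subspace_add by blast
    have h2: "scale c (cmp x b) + cmp y b \<in> ?X"
      using m step(2) vs.span_add vs.span_scale by blast
    show ?case using h1 h2 e by simp
  qed
  thus ?thesis by blast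
qed

lemma dim_cmp_le:
  assumes A: "A \<subseteq> hom L M" and B: "B \<subseteq> hom K L" and fA: "finite A" and fB: "finite B"
  shows "vs.dim ((\<lambda>(g,f). cmp g f) ` (A \<times> B)) \<le> vs.dim A * vs.dim B"
proof -
  obtain BA where BA: "BA \<subseteq> A" "vs.independent BA" "A \<subseteq> vs.span BA" "card BA = vs.dim A"
    using vs.basis_exists by blast
  obtain BB where BB: "BB \<subseteq> B" "vs.independent BB" "B \<subseteq> vs.span BB" "card BB = vs.dim B"
    using vs.basis_exists by blast
  have f: "finite BA" "finite BB" using BA BB fA fB finite_subset by blast+
  have "(\<lambda>(g,f). cmp g f) ` (A \<times> B) \<subseteq> vs.span ((\<lambda>(g,f). cmp g f) ` (BA \<times> BB))"
  proof
    fix x assume "x \<in> (\<lambda>(g,f). cmp g f) ` (A \<times> B)"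
    then obtain g f where gf: "g \<in> A" "f \<in> B" "x = cmp g f" by auto
    have "g \<in> vs.span BA" "f \<in> vs.span BB" using gf BA(3) BB(3) by auto
    moreover have "BA \<subseteq> hom L M" "BB \<subseteq> hom K L" using BA(1) BB(1) A B by auto
    ultimately show "x \<in> vs.span ((\<lambda>(g,f). cmp g f) ` (BA \<times> BB))"
      using cmp_span[of BA L M BB K g f] gf(3) by blast
  qed
  hence "vs.dim ((\<lambda>(g,f). cmp g f) ` (A \<times> B)) \<le> card ((\<lambda>(g,f). cmp g f) ` (BA \<times> BB))"
    using vs.dim_le_card f by blast
  also have "\<dots> \<le> card (BA \<times> BB)" using f by (intro card_image_le) auto
  finally show ?thesis using BA BB by (simp add: card_cartesian_product)
qed

lemma compose_hom:
  "w \<noteq> [] \<Longrightarrow> composable w \<Longrightarrow> \<forall>x\<in>set w. is_mor hom x \<Longrightarrow>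
   compose cmp w \<in> hom (fst (last w)) (fst (snd (hd w)))"
proof (induction w)
  case Nil then show ?case by simp
next
  case (Cons x w)
  show ?case
  proof (cases "w = []")
    case True then show ?thesis using Cons by (simp add: is_mor_def)
  next
    case False
    have "compose cmp w \<in> hom (fst (last w)) (fst (snd (hd w)))"
      using Cons False by (simp add: composable_Cons)
    moreover have "fst x = fst (snd (hd w))" using Cons.prems False by (simp add: composable_Cons)
    moreover have "snd (snd x) \<in> hom (fst x) (fst (snd x))" using Cons.prems by (simp add: is_mor_def)
    ultimately show ?thesis using False compose_Cons[OF False, of cmp x] cmp_hom by auto
  qed
qed

lemma compose_append:
  "u \<noteq> [] \<Longrightarrow> v \<noteq> [] \<Longrightarrow> composable (u @ v) \<Longrightarrow> \<forall>x\<in>set (u @ v). is_mor hom x \<Longrightarrow>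
   compose cmp (u @ v) = cmp (compose cmp u) (compose cmp v)"
proof (induction u)
  case Nil then show ?case by simp
next
  case (Cons x u)
  show ?case
  proof (cases "u = []")
    case True then show ?thesis using Cons compose_Cons by simp
  next
    case False
    have cu: "composable u" "composable v" "fst (last u) = fst (snd (hd v))"
      "fst x = fst (snd (hd u))"
      using Cons.prems False by (auto simp: composable_Cons composable_append)
    have IH: "compose cmp (u @ v) = cmp (compose cmp u) (compose cmp v)"
      using Cons False by (simp add: composable_Cons)
    have hv: "compose cmp v \<in> hom (fst (last v)) (fst (snd (hd v)))"
      using compose_hom[of v] Cons.prems cu by auto
    have hu: "compose cmp u \<in> hom (fst (last u)) (fst (snd (hd u)))"
      using compose_hom[of u] Cons.prems cu False by auto
    have hx: "snd (snd x) \<in> hom (fst x) (fst (snd x))" using Cons.prems by (simp add: is_mor_def)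
    have "compose cmp ((x # u) @ v) = cmp (snd (snd x)) (compose cmp (u @ v))"
      using compose_Cons[of "u @ v" cmp x] Cons.prems by simp
    also have "\<dots> = cmp (snd (snd x)) (cmp (compose cmp u) (compose cmp v))" using IH by simp
    also have "\<dots> = cmp (cmp (snd (snd x)) (compose cmp u)) (compose cmp v)"
      using cmp_assoc[OF hv, of "compose cmp u" "fst (snd (hd u))" "snd (snd x)" "fst (snd x)"] hu hx cu
      by simp
    also have "\<dots> = cmp (compose cmp (x # u)) (compose cmp v)" using compose_Cons[OF False] by simp
    finally show ?thesis .
  qed
qed

definition ws :: "('o \<times> 'o \<times> 'm) set \<Rightarrow> nat \<Rightarrow> 'o set \<Rightarrow> 'o \<Rightarrow> 'o \<Rightarrow> ('o \<times> 'o \<times> 'm) list set" where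
  "ws \<Sigma> n U t s = {w \<in> words \<Sigma> n. fst (snd (hd w)) = t \<and> fst (last w) = s \<and>
      (\<forall>x\<in>set w. fst x \<in> U \<and> fst (snd x) \<in> U)}"

definition E :: "('o \<times> 'o \<times> 'm) set \<Rightarrow> nat \<Rightarrow> 'o \<Rightarrow> 'm set" where
  "E \<Sigma> n t = compose cmp ` {w \<in> words \<Sigma> n. fst (last w) = t \<and> fst (snd (hd w)) = t}"

definition Y :: "('o \<times> 'o \<times> 'm) set \<Rightarrow> nat \<Rightarrow> 'o set \<Rightarrow> 'o \<Rightarrow> 'o \<Rightarrow> 'm set" where
  "Y \<Sigma> n U t s = (\<lambda>y. snd (snd y)) ` {y \<in> \<Sigma>. fst (snd y) = t \<and> fst y = s} \<union>
     (\<Union>y\<in>{y \<in> \<Sigma>. fst (snd y) = t}. cmp (snd (snd y)) ` (compose cmp ` ws \<Sigma> n (U - {t}) (fst y) s))"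

lemma decomp:
  assumes w: "w \<in> ws \<Sigma> n U t s" and mor: "\<forall>x\<in>\<Sigma>. is_mor hom x"
  shows "compose cmp w \<in> E \<Sigma> n t \<union> Y \<Sigma> n U t s \<union> (\<lambda>(g,f). cmp g f) ` (E \<Sigma> n t \<times> Y \<Sigma> n U t s)"
proof (cases "s = t")
  case True
  then show ?thesis using w unfolding ws_def E_def by auto
next
  case st: False
  have wl: "1 \<le> length w" "length w \<le> n" "set w \<subseteq> \<Sigma>" "composable w"
    and wt: "fst (snd (hd w)) = t" and wsrc: "fst (last w) = s"
    and wU: "\<forall>x\<in>set w. fst x \<in> U \<and> fst (snd x) \<in> U"
    using w unfolding ws_def words_def by auto
  have wne: "w \<noteq> []" using wl by auto
  have cw: "\<And>i. Suc i < length w \<Longrightarrow> fst (w ! i) = fst (snd (w ! Suc i))"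
    using wl(4) unfolding composable_def by blast
  define K where "K = {i. i < length w \<and> fst (snd (w ! i)) = t}"
  have fK: "finite K" unfolding K_def by auto
  have K0: "0 \<in> K" unfolding K_def using wne wt by (simp add: hd_conv_nth)
  define k where "k = Max K"
  have kK: "k \<in> K" unfolding k_def using fK K0 Max_in by blast
  have kmax: "\<And>i. i \<in> K \<Longrightarrow> i \<le> k" unfolding k_def using fK by simp
  have klen: "k < length w" and tk: "fst (snd (w ! k)) = t" using kK unfolding K_def by auto
  define u where "u = take k w"
  define y where "y = w ! k"
  define v where "v = drop (Suc k) w"
  have wsplit: "w = u @ y # v" unfolding u_def y_def v_def using klen by (simp add: id_take_nth_drop)
  have yS: "y \<in> \<Sigma>" using wl(3) klen unfolding y_def by auto
  have vnth: "\<And>j. j < length v \<Longrightarrow> v ! j = w ! (Suc k + j)" unfolding v_def using klen by simp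
  have lenv: "length v = length w - Suc k" unfolding v_def by simp
  have vtgt: "\<And>j. j < length v \<Longrightarrow> fst (snd (v ! j)) \<noteq> t"
  proof
    fix j assume j: "j < length v" and e: "fst (snd (v ! j)) = t"
    hence "Suc k + j \<in> K" unfolding K_def using vnth lenv by auto
    thus False using kmax by fastforce
  qed
  have vsrc: "\<And>j. j < length v \<Longrightarrow> fst (v ! j) \<noteq> t"
  proof -
    fix j assume j: "j < length v"
    show "fst (v ! j) \<noteq> t"
    proof (cases "Suc j < length v")
      case True
      have "fst (v ! j) = fst (snd (v ! Suc j))"
        using cw[of "Suc k + j"] vnth[OF j] vnth[OF True] lenv True by auto
      thus ?thesis using vtgt[OF True] by simp
    next
      case False
      hence "Suc k + j = length w - 1" using j lenv by auto
      hence "v ! j = last w" using vnth[OF j] wne by (simp add: last_conv_nth)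
      thus ?thesis using wsrc st by simp
    qed
  qed
  have setv: "set v \<subseteq> set w" unfolding v_def by (rule set_drop_subset)
  have yv_mem: "compose cmp (y # v) \<in> Y \<Sigma> n U t s"
  proof (cases "v = []")
    case True
    have "y = last w" using wsplit True by simp
    hence "fst y = s" using wsrc by simp
    moreover have "fst (snd y) = t" using tk unfolding y_def by simp
    ultimately show ?thesis using True yS unfolding Y_def by auto
  next
    case False
    have cv: "composable (y # v)" using wl(4) wsplit by (simp add: composable_append)
    hence fy: "fst y = fst (snd (hd v))" using False by (simp add: composable_Cons)
    have "v \<in> ws \<Sigma> n (U - {t}) (fst y) s"
      unfolding ws_def words_def
    proof (intro CollectI conjI ballI)
      show "1 \<le> length v" using False by (cases v) auto
      show "length v \<le> n" using lenv wl by simp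
      show "set v \<subseteq> \<Sigma>" using setv wl by blast
      show "composable v" using cv by (simp add: composable_Cons)
      show "fst (snd (hd v)) = fst y" using fy by simp
      show "fst (last v) = s" using wsplit False wsrc by simp
      fix x assume x: "x \<in> set v"
      then obtain j where j: "j < length v" "x = v ! j" by (auto simp: in_set_conv_nth)
      show "fst x \<in> U - {t}" using vsrc[OF j(1)] j wU setv x by blast
      show "fst (snd x) \<in> U - {t}" using vtgt[OF j(1)] j wU setv x by blast
    qed
    moreover have "fst (snd y) = t" using tk unfolding y_def by simp
    ultimately show ?thesis using yS compose_Cons[OF False, of cmp y] unfolding Y_def by blast
  qed
  show ?thesis
  proof (cases "k = 0")
    case True
    hence "w = y # v" using wsplit unfolding u_def by simp
    thus ?thesis using yv_mem by simp
  next
    case False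
    have une: "u \<noteq> []" unfolding u_def using False wne by simp
    have "u \<in> {w \<in> words \<Sigma> n. fst (last w) = t \<and> fst (snd (hd w)) = t}"
      unfolding words_def
    proof (intro CollectI conjI)
      show "1 \<le> length u" using une by (cases u) auto
      show "length u \<le> n" unfolding u_def using wl by simp
      show "set u \<subseteq> \<Sigma>" unfolding u_def using wl(3) set_take_subset by fast
      show "composable u" using wl(4) wsplit by (simp add: composable_append)
      show "fst (snd (hd u)) = t" using wt une wsplit by simp
      have "last u = u ! (length u - 1)" using une by (simp add: last_conv_nth)
      also have "\<dots> = w ! (k - 1)" unfolding u_def using False klen by simp
      finally have "last u = w ! (k - 1)" .
      moreover have "fst (w ! (k - 1)) = fst (snd (w ! k))" using cw[of "k - 1"] False klen by simp
      ultimately show "fst (last u) = t" using tk by simp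
    qed
    hence uE: "compose cmp u \<in> E \<Sigma> n t" unfolding E_def by blast
    have "compose cmp w = cmp (compose cmp u) (compose cmp (y # v))"
    proof -
      have "\<forall>x\<in>set (u @ y # v). is_mor hom x" using wsplit wl(3) mor by auto
      thus ?thesis using compose_append[of u "y # v"] wsplit une wl(4) by auto
    qed
    thus ?thesis using uE yv_mem by auto
  qed
qed

lemma finite_words: "finite \<Sigma> \<Longrightarrow> finite (words \<Sigma> n)"
  by (rule finite_subset[OF _ finite_lists_length_le[of \<Sigma> n]]) (auto simp: words_def)

lemma fin_ws: "finite \<Sigma> \<Longrightarrow> finite (compose cmp ` ws \<Sigma> n U t s)"
  using finite_words[of \<Sigma> n] unfolding ws_def by auto

lemma fin_E: "finite \<Sigma> \<Longrightarrow> finite (E \<Sigma> n t)"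
  using finite_words[of \<Sigma> n] unfolding E_def by auto

lemma fin_Y: "finite \<Sigma> \<Longrightarrow> finite (Y \<Sigma> n U t s)"
  unfolding Y_def using fin_ws by auto

lemma ws_hom: "\<forall>x\<in>\<Sigma>. is_mor hom x \<Longrightarrow> compose cmp ` ws \<Sigma> n U t s \<subseteq> hom s t"
proof
  fix z assume m: "\<forall>x\<in>\<Sigma>. is_mor hom x" and "z \<in> compose cmp ` ws \<Sigma> n U t s"
  then obtain w where w: "w \<in> ws \<Sigma> n U t s" "z = compose cmp w" by auto
  hence "w \<noteq> []" "composable w" "\<forall>x\<in>set w. is_mor hom x" "fst (last w) = s" "fst (snd (hd w)) = t"
    using m unfolding ws_def words_def by auto
  thus "z \<in> hom s t" using compose_hom[of w] w by simp
qed

lemma E_hom: "\<forall>x\<in>\<Sigma>. is_mor hom x \<Longrightarrow> E \<Sigma> n t \<subseteq> hom t t"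
proof
  fix z assume m: "\<forall>x\<in>\<Sigma>. is_mor hom x" and "z \<in> E \<Sigma> n t"
  then obtain w where w: "w \<in> words \<Sigma> n" "fst (last w) = t" "fst (snd (hd w)) = t" "z = compose cmp w"
    unfolding E_def by auto
  hence "w \<noteq> []" "composable w" "\<forall>x\<in>set w. is_mor hom x"
    using m unfolding words_def by auto
  thus "z \<in> hom t t" using compose_hom[of w] w by simp
qed

lemma Y_hom: "\<forall>x\<in>\<Sigma>. is_mor hom x \<Longrightarrow> Y \<Sigma> n U t s \<subseteq> hom s t"
proof
  fix z assume m: "\<forall>x\<in>\<Sigma>. is_mor hom x" and z: "z \<in> Y \<Sigma> n U t s"
  show "z \<in> hom s t"
  proof (cases "z \<in> (\<lambda>y. snd (snd y)) ` {y \<in> \<Sigma>. fst (snd y) = t \<and> fst y = s}")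
    case True
    then show ?thesis using m by (auto simp: is_mor_def)
  next
    case False
    then obtain y f where y: "y \<in> \<Sigma>" "fst (snd y) = t" "f \<in> compose cmp ` ws \<Sigma> n (U - {t}) (fst y) s"
      "z = cmp (snd (snd y)) f"
      using z unfolding Y_def by blast
    have "f \<in> hom s (fst y)" using ws_hom[OF m] y(3) by blast
    moreover have "snd (snd y) \<in> hom (fst y) t" using m y by (auto simp: is_mor_def)
    ultimately show ?thesis using cmp_hom y(4) by blast
  qed
qed

lemma ws_empty: "t \<notin> U \<Longrightarrow> ws \<Sigma> n U t s = {}"
proof (rule equals0I)
  fix w assume t: "t \<notin> U" and "w \<in> ws \<Sigma> n U t s"
  hence "w \<noteq> []" "\<forall>x\<in>set w. fst (snd x) \<in> U" "fst (snd (hd w)) = t"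
    unfolding ws_def words_def by auto
  thus False using t hd_in_set by metis
qed

lemma count:
  assumes fin: "finite \<Sigma>" and mor: "\<forall>x\<in>\<Sigma>. is_mor hom x"
    and Db: "\<And>q. vs.dim (E \<Sigma> n q) \<le> D"
  shows "finite U \<Longrightarrow> card U = k \<Longrightarrow>
    vs.dim (compose cmp ` ws \<Sigma> n U t s) + 1 \<le> ((D+1)*(card \<Sigma>+1))^k"
proof (induction k arbitrary: U t s)
  case 0
  hence "U = {}" by simp
  hence "ws \<Sigma> n U t s = {}" using ws_empty by blast
  then show ?case using vs.dim_le_card'[of "{}"] by simp
next
  case (Suc k)
  define S where "S = card \<Sigma>"
  define G where "G = ((D+1)*(S+1))^k"
  have G1: "1 \<le> G" unfolding G_def by simp
  show ?case
  proof (cases "t \<in> U")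
    case False
    hence "ws \<Sigma> n U t s = {}" using ws_empty by blast
    hence "vs.dim (compose cmp ` ws \<Sigma> n U t s) = 0" using vs.dim_le_card'[of "{}"] by simp
    moreover have "1 \<le> ((D+1)*(card \<Sigma>+1))^Suc k" by (rule one_le_power) simp
    ultimately show ?thesis by simp
  next
    case tU: True
    have cU: "card (U - {t}) = k" "finite (U - {t})" using Suc.prems tU by auto
    have IH: "vs.dim (compose cmp ` ws \<Sigma> n (U - {t}) t' s') + 1 \<le> G" for t' s'
      using Suc.IH[OF cU(2) cU(1)] unfolding G_def S_def by blast
    define Y1 where "Y1 = (\<lambda>y. snd (snd y)) ` {y \<in> \<Sigma>. fst (snd y) = t \<and> fst y = s}"
    define Z :: "'o \<times> 'o \<times> 'm \<Rightarrow> 'm set" where "Z y = cmp (snd (snd y)) ` (compose cmp ` ws \<Sigma> n (U - {t}) (fst y) s)" for y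
    define T where "T = {y \<in> \<Sigma>. fst (snd y) = t}"
    have Yeq: "Y \<Sigma> n U t s = Y1 \<union> (\<Union>y\<in>T. Z y)" unfolding Y_def Y1_def Z_def T_def by simp
    have fT: "finite T" unfolding T_def using fin by simp
    have fY1: "finite Y1" unfolding Y1_def using fin by simp
    have fZ: "finite (Z y)" for y unfolding Z_def using fin_ws[OF fin] by simp
    have dY1: "vs.dim Y1 \<le> S"
    proof -
      have "vs.dim Y1 \<le> card Y1" using vs.dim_le_card' fY1 by blast
      also have "\<dots> \<le> card {y \<in> \<Sigma>. fst (snd y) = t \<and> fst y = s}" unfolding Y1_def
        using fin by (intro card_image_le) simp
      also have "\<dots> \<le> S" unfolding S_def using fin by (intro card_mono) auto
      finally show ?thesis .
    qed
    have dZ: "vs.dim (Z y) \<le> G - 1" if y: "y \<in> T" for y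
    proof -
      have eq: "Z y = (\<lambda>(g,f). cmp g f) ` ({snd (snd y)} \<times> compose cmp ` ws \<Sigma> n (U - {t}) (fst y) s)"
        unfolding Z_def by auto
      have h1: "{snd (snd y)} \<subseteq> hom (fst y) t" using y mor unfolding T_def by (auto simp: is_mor_def)
      have h2: "compose cmp ` ws \<Sigma> n (U - {t}) (fst y) s \<subseteq> hom s (fst y)" using ws_hom[OF mor] .
      have "vs.dim (Z y) \<le> vs.dim {snd (snd y)} * vs.dim (compose cmp ` ws \<Sigma> n (U - {t}) (fst y) s)"
        unfolding eq using dim_cmp_le[OF h1 h2] fin_ws[OF fin] by simp
      also have "\<dots> \<le> 1 * vs.dim (compose cmp ` ws \<Sigma> n (U - {t}) (fst y) s)"
        using vs.dim_le_card'[of "{snd (snd y)}"] by (intro mult_right_mono) auto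
      also have "\<dots> \<le> G - 1" using IH[of "fst y" s] by simp
      finally show ?thesis .
    qed
    have dY: "vs.dim (Y \<Sigma> n U t s) \<le> S * G"
    proof -
      have "vs.dim (Y \<Sigma> n U t s) \<le> vs.dim Y1 + vs.dim (\<Union>y\<in>T. Z y)"
        unfolding Yeq using fY1 fT fZ by (intro vs.dim_Un_le) auto
      also have "\<dots> \<le> S + (\<Sum>y\<in>T. vs.dim (Z y))"
        using dY1 vs.dim_UN_le[OF fT, of Z] fZ by (intro add_mono) auto
      also have "(\<Sum>y\<in>T. vs.dim (Z y)) \<le> card T * (G - 1)"
        using dZ sum_bounded_above[of T "\<lambda>y. vs.dim (Z y)" "G - 1"] by simp
      also have "card T \<le> S" unfolding S_def T_def using fin by (intro card_mono) auto
      hence "card T * (G - 1) \<le> S * (G - 1)" by simp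
      hence "S + card T * (G - 1) \<le> S * G" using G1
        by (metis add.commute add_le_cancel_left le_add_diff_inverse mult_Suc_right plus_1_eq_Suc)
      finally show ?thesis by simp
    qed
    let ?C = "compose cmp ` ws \<Sigma> n U t s"
    let ?P = "(\<lambda>(g,f). cmp g f) ` (E \<Sigma> n t \<times> Y \<Sigma> n U t s)"
    have sub: "?C \<subseteq> E \<Sigma> n t \<union> Y \<Sigma> n U t s \<union> ?P" using decomp[OF _ mor] by blast
    have fP: "finite ?P" using fin_E[OF fin] fin_Y[OF fin] by simp
    have dP: "vs.dim ?P \<le> D * vs.dim (Y \<Sigma> n U t s)"
    proof -
      have "vs.dim ?P \<le> vs.dim (E \<Sigma> n t) * vs.dim (Y \<Sigma> n U t s)"
        using dim_cmp_le[OF E_hom[OF mor] Y_hom[OF mor]] fin_E[OF fin] fin_Y[OF fin] by blast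
      thus ?thesis using Db[of t] by (meson le_trans mult_le_mono1)
    qed
    have "vs.dim ?C \<le> vs.dim (E \<Sigma> n t \<union> Y \<Sigma> n U t s \<union> ?P)"
      using vs.dim_le_subset[OF _ sub] fin_E[OF fin] fin_Y[OF fin] fP by blast
    also have "\<dots> \<le> vs.dim (E \<Sigma> n t \<union> Y \<Sigma> n U t s) + vs.dim ?P"
      using fin_E[OF fin] fin_Y[OF fin] fP by (intro vs.dim_Un_le) auto
    also have "\<dots> \<le> vs.dim (E \<Sigma> n t) + vs.dim (Y \<Sigma> n U t s) + vs.dim ?P"
      using vs.dim_Un_le[OF fin_E[OF fin] fin_Y[OF fin]] by simp
    also have "\<dots> \<le> D + vs.dim (Y \<Sigma> n U t s) + D * vs.dim (Y \<Sigma> n U t s)"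
      using Db[of t] dP by simp
    finally have c1: "vs.dim ?C + 1 \<le> (D + 1) * (vs.dim (Y \<Sigma> n U t s) + 1)" by (simp add: algebra_simps)
    also have "\<dots> \<le> (D + 1) * (S * G + G)" using dY G1 by (intro mult_left_mono) auto
    also have "\<dots> = ((D+1)*(S+1))^Suc k" unfolding G_def by (simp add: algebra_simps)
    finally show ?thesis unfolding S_def .
  qed
qed

lemma final:
  assumes fin: "finite \<Sigma>" and mor: "\<forall>x\<in>\<Sigma>. is_mor hom x"
    and hyp: "limsup (\<lambda>n. ereal (ln (real (vs.dim (W scale cmp \<Sigma> n))) / real n)) > 0"
  shows "\<exists>L. limsup (\<lambda>n. ereal (ln (real (vs.dim (W_end scale cmp \<Sigma> n L))) / real n)) > 0"
proof -
  define Ob where "Ob = fst ` \<Sigma> \<union> (\<lambda>x. fst (snd x)) ` \<Sigma>"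
  define m where "m = card Ob"
  define S where "S = card \<Sigma>"
  define C :: real where "C = real (m * m * (S+1)^m) + 1"
  have fOb: "finite Ob" unfolding Ob_def using fin by simp
  have bnd: "real (vs.dim (W scale cmp \<Sigma> n)) \<le> C * (1 + (\<Sum>q\<in>Ob. real (vs.dim (E \<Sigma> n q))))^m" for n
  proof -
    define D where "D = (\<Sum>q\<in>Ob. vs.dim (E \<Sigma> n q))"
    have Db: "vs.dim (E \<Sigma> n q) \<le> D" for q
    proof (cases "q \<in> Ob")
      case True then show ?thesis unfolding D_def using fOb by (intro member_le_sum) auto
    next
      case False
      have "E \<Sigma> n q = {}"
      proof (rule equals0I)
        fix z assume "z \<in> E \<Sigma> n q"
        then obtain w where w: "w \<in> words \<Sigma> n" "fst (snd (hd w)) = q" unfolding E_def by auto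
        hence "w \<noteq> []" "set w \<subseteq> \<Sigma>" unfolding words_def by auto
        hence "hd w \<in> \<Sigma>" by auto
        thus False using w False unfolding Ob_def by auto
      qed
      then show ?thesis using vs.dim_le_card'[of "{}"] by simp
    qed
    define G where "G = ((D+1)*(S+1))^m"
    have cnt: "vs.dim (compose cmp ` ws \<Sigma> n Ob t s) \<le> G" for t s
      using count[OF fin mor Db fOb refl, of t s] unfolding G_def m_def S_def by simp
    have sub: "compose cmp ` words \<Sigma> n \<subseteq> (\<Union>t\<in>Ob. \<Union>s\<in>Ob. compose cmp ` ws \<Sigma> n Ob t s)"
    proof
      fix z assume "z \<in> compose cmp ` words \<Sigma> n"
      then obtain w where w: "w \<in> words \<Sigma> n" "z = compose cmp w" by auto
      hence ne: "w \<noteq> []" and sw: "set w \<subseteq> \<Sigma>" unfolding words_def by auto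
      have "hd w \<in> \<Sigma>" "last w \<in> \<Sigma>" using ne sw by auto
      hence o: "fst (snd (hd w)) \<in> Ob" "fst (last w) \<in> Ob" unfolding Ob_def by auto
      have "\<forall>x\<in>set w. fst x \<in> Ob \<and> fst (snd x) \<in> Ob" using sw unfolding Ob_def by auto
      hence "w \<in> ws \<Sigma> n Ob (fst (snd (hd w))) (fst (last w))" using w unfolding ws_def by auto
      thus "z \<in> (\<Union>t\<in>Ob. \<Union>s\<in>Ob. compose cmp ` ws \<Sigma> n Ob t s)" using o w by blast
    qed
    have "vs.dim (W scale cmp \<Sigma> n) = vs.dim (compose cmp ` words \<Sigma> n)"
      unfolding W_def by (rule vs.dim_span)
    also have "\<dots> \<le> vs.dim (\<Union>t\<in>Ob. \<Union>s\<in>Ob. compose cmp ` ws \<Sigma> n Ob t s)"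
      using sub fOb fin_ws[OF fin] by (intro vs.dim_le_subset) auto
    also have "\<dots> \<le> (\<Sum>t\<in>Ob. vs.dim (\<Union>s\<in>Ob. compose cmp ` ws \<Sigma> n Ob t s))"
      using fOb fin_ws[OF fin] by (intro vs.dim_UN_le) auto
    also have "\<dots> \<le> (\<Sum>t\<in>Ob. \<Sum>s\<in>Ob. vs.dim (compose cmp ` ws \<Sigma> n Ob t s))"
      using fOb fin_ws[OF fin] by (intro sum_mono vs.dim_UN_le) auto
    also have "\<dots> \<le> (\<Sum>t\<in>Ob. \<Sum>s\<in>Ob. G)" using cnt by (intro sum_mono) auto
    also have "\<dots> = m * m * G" unfolding m_def by simp
    also have "\<dots> = m * m * (S+1)^m * (D+1)^m" unfolding G_def by (simp only: power_mult_distrib mult_ac)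
    finally have nb: "vs.dim (W scale cmp \<Sigma> n) \<le> m * m * (S+1)^m * (D+1)^m" .
    have "real (vs.dim (W scale cmp \<Sigma> n)) \<le> real (m * m * (S+1)^m) * real ((D+1)^m)"
      using nb by (metis of_nat_le_iff of_nat_mult)
    also have "\<dots> \<le> C * real ((D+1)^m)" unfolding C_def by (intro mult_right_mono) auto
    also have "real ((D+1)^m) = (1 + (\<Sum>q\<in>Ob. real (vs.dim (E \<Sigma> n q))))^m"
      unfolding D_def by simp
    finally show ?thesis .
  qed
  have C1: "C \<ge> 1" unfolding C_def by simp
  obtain q where q: "q \<in> Ob" "limsup (\<lambda>n. ereal (ln (real (vs.dim (E \<Sigma> n q))) / real n)) > 0"
    using asym[OF fOb C1 bnd hyp] by blast
  have "vs.dim (W_end scale cmp \<Sigma> n q) = vs.dim (E \<Sigma> n q)" for n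
    unfolding W_end_def E_def by (rule vs.dim_span)
  hence "(\<lambda>n. ereal (ln (real (vs.dim (W_end scale cmp \<Sigma> n q))) / real n)) =
         (\<lambda>n. ereal (ln (real (vs.dim (E \<Sigma> n q))) / real n))" by simp
  thus ?thesis using q(2) by (intro exI[of _ q]) simp
qed

end

theorem mainTheorem14:
  fixes scale :: "'k::field \<Rightarrow> 'm::ab_group_add \<Rightarrow> 'm"
    and hom :: "'o \<Rightarrow> 'o \<Rightarrow> 'm set"
    and cmp :: "'m \<Rightarrow> 'm \<Rightarrow> 'm"
    and ident :: "'o \<Rightarrow> 'm"
  assumes "klinear_cat scale hom cmp ident"
    and "exp_alg_growth scale hom cmp"
  shows "\<exists>L \<Sigma>. finite \<Sigma> \<and> (\<forall>x\<in>\<Sigma>. is_mor hom x) \<and>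
    limsup (\<lambda>n. ereal (ln (real (vector_space.dim scale (W_end scale cmp \<Sigma> n L))) / real n)) > 0"
proof -
  interpret kcat scale hom cmp ident using assms(1) by (unfold_locales)
  obtain \<Sigma> where S: "finite \<Sigma>" "\<forall>x\<in>\<Sigma>. is_mor hom x"
    "limsup (\<lambda>n. ereal (ln (real (vector_space.dim scale (W scale cmp \<Sigma> n))) / real n)) > 0"
    using assms(2) unfolding exp_alg_growth_def by blast
  from final[OF S] S(1,2) show ?thesis by blast
qed

end
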